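(* Let $\mathcal{A}$ be an $[n_a,k_a]_q$ cyclic code with minimum Hamming distance $d_a$ and let $\mathcal{B}$ be an $[n_b,k_b]_q$ cyclic code with minimum Hamming distance $d_b$, where $\gcd(n_a,n_b)=1$. Let $\alpha$ be an element of order $n_a$ in $\mathbb{F}_{q^{s_a}}$ and $\beta$ an element of order $n_b$ in $\mathbb{F}_{q^{s_b}}$. Let $f_1,f_2,m_1,m_2,\delta,\nu$ be integers with $m_1\neq 0$, $m_2\neq 0$, $\gcd(n_a,m_1)=\gcd(n_b,m_2)=1$, $\delta\geq 2$ and $\nu>0$, such that $$\sum_{i=0}^{\infty} a(\alpha^{f_1+im_1+j})\cdot b(\beta^{f_2+im_2+j})\,X^i \equiv 0 \bmod X^{\delta-1}\quad \text{for all } j=0,1,\dots,\nu$$ holds for all codewords $a(X)\in\mathcal{A}$ and $b(X)\in\mathcal{B}$ (the power series being over $\mathbb{F}_{q^s}$ with $s=\mathrm{lcm}(s_a,s_b)$). Then $$d_a \geq \left\lceil \frac{\delta+\nu}{d_b}\right\rceil.$$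
   Context: A cyclic $[n,k]_q$ code is an ideal of $\mathbb{F}_q[X]/(X^n-1)$; codewords are identified with polynomials $c(X)=\sum_{i=0}^{n-1}c_iX^i$ of degree less than $n$, and $c(\gamma)$ denotes evaluation of this polynomial at $\gamma$ in an extension field of $\mathbb{F}_q$. *)

theory Defs
  imports "HOL-Computational_Algebra.Polynomial"
begin

definition is_subfield :: "'f::field set \<Rightarrow> bool" where
  "is_subfield K \<longleftrightarrow> 0 \<in> K \<and> 1 \<in> K \<and>
     (\<forall>x\<in>K. \<forall>y\<in>K. x + y \<in> K \<and> x * y \<in> K) \<and>
     (\<forall>x\<in>K. - x \<in> K) \<and> (\<forall>x\<in>K. x \<noteq> 0 \<longrightarrow> inverse x \<in> K)"

definition elem_order :: "'f::field \<Rightarrow> nat \<Rightarrow> bool" where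
  "elem_order x n \<longleftrightarrow> 0 < n \<and> x ^ n = 1 \<and> (\<forall>m. 0 < m \<and> m < n \<longrightarrow> x ^ m \<noteq> 1)"

text \<open>Cyclic code of length n over the subfield K (= F_q) of the ambient field:
  an ideal of K[X]/(X^n - 1), codewords being the polynomials of degree < n with
  coefficients in K.\<close>
definition cyclic_code :: "'f::field set \<Rightarrow> nat \<Rightarrow> 'f poly set \<Rightarrow> bool" where
  "cyclic_code K n C \<longleftrightarrow> 0 < n \<and>
     (\<forall>c\<in>C. degree c < n \<and> (\<forall>i. coeff c i \<in> K)) \<and>
     0 \<in> C \<and>
     (\<forall>c\<in>C. \<forall>e\<in>C. c + e \<in> C) \<and>
     (\<forall>c\<in>C. \<forall>t\<in>K. smult t c \<in> C) \<and>
     (\<forall>c\<in>C. (monom 1 1 * c) mod (monom 1 n - 1) \<in> C)"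

definition hweight :: "'f::zero poly \<Rightarrow> nat" where
  "hweight c = card {i. coeff c i \<noteq> 0}"

text \<open>Minimum Hamming distance d of a (linear) code: minimum weight of a nonzero codeword.\<close>
definition min_distance :: "'f::zero poly set \<Rightarrow> nat \<Rightarrow> bool" where
  "min_distance C d \<longleftrightarrow> (\<exists>c\<in>C. c \<noteq> 0 \<and> hweight c = d) \<and>
     (\<forall>c\<in>C. c \<noteq> 0 \<longrightarrow> d \<le> hweight c)"

end

theory Submission
  imports Defs
begin


lemma poly_sum_bound:
  fixes p :: "'a::comm_ring_1 poly"
  assumes "degree p < D"
  shows "poly p x = (\<Sum>i<D. coeff p i * x ^ i)"
proof -
  have "poly p x = (\<Sum>i\<le>degree p. coeff p i * x ^ i)" by (rule poly_altdef)
  also have "\<dots> = (\<Sum>i<D. coeff p i * x ^ i)"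
    by (rule sum.mono_neutral_left) (use assms in \<open>auto simp: coeff_eq_0\<close>)
  finally show ?thesis .
qed

lemma abstract_bound:
  fixes T :: "'t set" and c X Y :: "'t \<Rightarrow> 'f::field"
  assumes fin: "finite T" and ne: "T \<noteq> {}" and c: "\<And>t. t \<in> T \<Longrightarrow> c t \<noteq> 0"
    and injX: "inj_on X T" and injY: "inj_on Y T" and D: "D \<ge> 1"
    and z: "\<And>i j. i < D \<Longrightarrow> j \<le> V \<Longrightarrow> (\<Sum>t\<in>T. c t * X t ^ i * Y t ^ j) = 0"
  shows "D + V + 1 \<le> card T"
proof (rule ccontr)
  assume "\<not> ?thesis"
  hence cT: "card T \<le> D + V" by simp
  obtain t0 where t0: "t0 \<in> T" using ne by blast
  define R where "R = T - {t0}"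
  have finR: "finite R" using fin by (simp add: R_def)
  have cR: "card R \<le> D + V - 1" using cT t0 fin by (simp add: R_def)
  obtain S1 where S1: "S1 \<subseteq> R" "card S1 = min (card R) (D - 1)"
    using obtain_subset_with_card_n[of "min (card R) (D - 1)" R] by auto
  define S2 where "S2 = R - S1"
  have fin1: "finite S1" using S1 finR finite_subset by blast
  have fin2: "finite S2" using finR by (simp add: S2_def)
  have cS2: "card S2 \<le> V" using S1 cR finR fin1 D by (simp add: S2_def card_Diff_subset)
  define p where "p = (\<Prod>s\<in>S1. [:- X s, 1:])"
  define r where "r = (\<Prod>s\<in>S2. [:- Y s, 1:])"
  have degp: "degree p < D"
  proof -
    have "degree p \<le> (\<Sum>s\<in>S1. degree [:- X s, 1:])" unfolding p_def using degree_prod_sum_le[OF fin1, of "\<lambda>s. [:- X s, 1:]"] by (simp add: o_def)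
    also have "\<dots> = card S1" by simp
    finally show ?thesis using S1 D by linarith
  qed
  have degr: "degree r < V + 1"
  proof -
    have "degree r \<le> (\<Sum>s\<in>S2. degree [:- Y s, 1:])" unfolding r_def using degree_prod_sum_le[OF fin2, of "\<lambda>s. [:- Y s, 1:]"] by (simp add: o_def)
    also have "\<dots> = card S2" by simp
    finally show ?thesis using cS2 by linarith
  qed
  have polyp: "poly p x = (\<Prod>s\<in>S1. x - X s)" for x unfolding p_def by (simp add: poly_prod)
  have polyr: "poly r y = (\<Prod>s\<in>S2. y - Y s)" for y unfolding r_def by (simp add: poly_prod)
  have "(\<Sum>t\<in>T. c t * poly p (X t) * poly r (Y t))
      = (\<Sum>t\<in>T. c t * (\<Sum>i<D. coeff p i * X t ^ i) * (\<Sum>j<V+1. coeff r j * Y t ^ j))"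
    using poly_sum_bound[OF degp] poly_sum_bound[OF degr] by simp
  also have "\<dots> = (\<Sum>t\<in>T. \<Sum>i<D. \<Sum>j<V+1. coeff p i * coeff r j * (c t * X t ^ i * Y t ^ j))"
    by (simp only: sum_distrib_left sum_distrib_right mult_ac)
  also have "\<dots> = (\<Sum>i<D. \<Sum>t\<in>T. \<Sum>j<V+1. coeff p i * coeff r j * (c t * X t ^ i * Y t ^ j))"
    by (rule sum.swap)
  also have "\<dots> = (\<Sum>i<D. \<Sum>j<V+1. \<Sum>t\<in>T. coeff p i * coeff r j * (c t * X t ^ i * Y t ^ j))"
    by (rule sum.cong[OF refl], rule sum.swap)
  also have "\<dots> = (\<Sum>i<D. \<Sum>j<V+1. coeff p i * coeff r j * (\<Sum>t\<in>T. c t * X t ^ i * Y t ^ j))"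
    by (simp only: sum_distrib_left)
  also have "\<dots> = 0" using z by (simp del: lessThan_Suc add: Suc_le_eq)
  finally have sum0: "(\<Sum>t\<in>T. c t * poly p (X t) * poly r (Y t)) = 0" .
  have "(\<Sum>t\<in>T. c t * poly p (X t) * poly r (Y t)) = c t0 * poly p (X t0) * poly r (Y t0)
        + (\<Sum>t\<in>R. c t * poly p (X t) * poly r (Y t))"
    using fin t0 by (simp add: R_def sum.remove)
  also have "(\<Sum>t\<in>R. c t * poly p (X t) * poly r (Y t)) = 0"
  proof (rule sum.neutral, intro ballI)
    fix t assume t: "t \<in> R"
    show "c t * poly p (X t) * poly r (Y t) = 0"
    proof (cases "t \<in> S1")
      case True thus ?thesis using fin1 by (auto simp: polyp prod_zero_iff)
    next
      case False hence "t \<in> S2" using t by (simp add: S2_def)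
      thus ?thesis using fin2 by (auto simp: polyr prod_zero_iff)
    qed
  qed
  finally have "c t0 * poly p (X t0) * poly r (Y t0) = 0" using sum0 by simp
  moreover have "poly p (X t0) \<noteq> 0"
  proof -
    have "\<forall>s\<in>S1. X t0 \<noteq> X s"
      using injX S1(1) t0 unfolding R_def inj_on_def by blast
    thus ?thesis using fin1 by (simp add: polyp prod_zero_iff)
  qed
  moreover have "poly r (Y t0) \<noteq> 0"
  proof -
    have "\<forall>s\<in>S2. Y t0 \<noteq> Y s"
      using injY t0 unfolding S2_def R_def inj_on_def by blast
    thus ?thesis using fin2 by (simp add: polyr prod_zero_iff)
  qed
  ultimately show False using c[OF t0] by simp
qed


lemma elem_order_nz: "elem_order (x::'f::field) n \<Longrightarrow> x \<noteq> 0"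
  unfolding elem_order_def by (metis power_0_left zero_neq_one less_not_refl2)

lemma elem_order_powi:
  fixes x :: "'f::field"
  assumes o: "elem_order x n"
  shows "x powi e = 1 \<longleftrightarrow> int n dvd e"
proof -
  have nz: "x \<noteq> 0" using elem_order_nz[OF o] .
  have n: "0 < n" "x ^ n = 1" "\<And>m. 0 < m \<Longrightarrow> m < n \<Longrightarrow> x ^ m \<noteq> 1"
    using o unfolding elem_order_def by auto
  have "e = int n * (e div int n) + e mod int n" by simp
  hence "x powi e = x powi (int n * (e div int n)) * x powi (e mod int n)"
    using nz by (metis power_int_add)
  also have "x powi (int n * (e div int n)) = 1"
    by (simp add: power_int_mult n(2))
  finally have xe: "x powi e = x ^ nat (e mod int n)"
    by (simp add: power_int_nonneg_exp n(1))
  show ?thesis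
  proof
    assume "x powi e = 1"
    hence "x ^ nat (e mod int n) = 1" using xe by simp
    moreover have "nat (e mod int n) < n" using n(1)
      by (simp add: nat_less_iff)
    ultimately have "nat (e mod int n) = 0" using n(3) by (meson neq0_conv)
    hence "e mod int n \<le> 0" by simp
    moreover have "0 \<le> e mod int n" using n(1) by simp
    ultimately have "e mod int n = 0" by linarith
    thus "int n dvd e" by (simp add: dvd_eq_mod_eq_0)
  next
    assume "int n dvd e"
    hence "e mod int n = 0" by simp
    thus "x powi e = 1" using xe by simp
  qed
qed

lemma coprime_orders_one:
  fixes z :: "'f::field"
  assumes "z ^ na = 1" "z ^ nb = 1" "gcd na nb = 1"
  shows "z = 1"
proof -
  obtain s t :: int where st: "s * int na + t * int nb = 1"
    using bezout_int[of "int na" "int nb"] assms(3) by (metis gcd_int_int_eq of_nat_1)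
  have nz: "z \<noteq> 0" using assms(1,2,3) by (metis gcd_nat.idem one_neq_zero power_0_left zero_neq_one gcd_0_nat power_eq_0_iff)
  have "z = z powi (s * int na + t * int nb)" using st by simp
  also have "\<dots> = z powi (int na * s) * z powi (int nb * t)"
    using nz by (simp add: power_int_add mult.commute)
  also have "\<dots> = 1" by (simp add: power_int_mult assms(1,2))
  finally show ?thesis .
qed

lemma inj_lemma:
  fixes \<alpha> \<beta> :: "'f::field"
  assumes oa: "elem_order \<alpha> na" and ob: "elem_order \<beta> nb" and g: "gcd na nb = 1"
    and g1: "gcd (int na) m1 = 1" and g2: "gcd (int nb) m2 = 1"
    and u: "u < na" "u' < na" and w: "w < nb" "w' < nb"
    and eq: "(\<alpha>^u) powi m1 * (\<beta>^w) powi m2 = (\<alpha>^u') powi m1 * (\<beta>^w') powi m2"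
  shows "u = u' \<and> w = w'"
proof -
  have na: "\<alpha> \<noteq> 0" using elem_order_nz[OF oa] .
  have nb: "\<beta> \<noteq> 0" using elem_order_nz[OF ob] .
  have oa1: "\<alpha> ^ na = 1" and ob1: "\<beta> ^ nb = 1" using oa ob unfolding elem_order_def by auto
  define z where "z = \<alpha> powi ((int u - int u') * m1)"
  have eq': "\<alpha> powi (int u * m1) * \<beta> powi (int w * m2) = \<alpha> powi (int u' * m1) * \<beta> powi (int w' * m2)"
    using eq by (simp add: power_int_power)
  have z1: "z = \<alpha> powi (int u * m1) / \<alpha> powi (int u' * m1)"
    unfolding z_def using na by (simp add: left_diff_distrib power_int_diff)
  have z2: "z = \<beta> powi ((int w' - int w) * m2)"
  proof -
    have an: "\<alpha> powi (int u' * m1) \<noteq> 0" using na by simp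
    have bn: "\<beta> powi (int w * m2) \<noteq> 0" using nb by simp
    have "\<alpha> powi (int u' * m1) * (z * \<beta> powi (int w * m2)) = \<alpha> powi (int u' * m1) * \<beta> powi (int w' * m2)"
    proof -
      have za: "z * \<alpha> powi (int u' * m1) = \<alpha> powi (int u * m1)" using z1 an by simp
      have "\<alpha> powi (int u' * m1) * (z * \<beta> powi (int w * m2)) = (z * \<alpha> powi (int u' * m1)) * \<beta> powi (int w * m2)"
        by (simp add: mult_ac)
      also have "\<dots> = \<alpha> powi (int u' * m1) * \<beta> powi (int w' * m2)" using za eq' by simp
      finally show ?thesis .
    qed
    hence "z * \<beta> powi (int w * m2) = \<beta> powi (int w' * m2)" using an mult_left_cancel by blast
    hence "z = \<beta> powi (int w' * m2) / \<beta> powi (int w * m2)"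
      using bn by (simp add: field_simps)
    thus ?thesis using nb by (simp add: left_diff_distrib power_int_diff)
  qed
  have za: "z ^ na = 1"
  proof -
    have "z ^ na = \<alpha> powi (int na * ((int u - int u') * m1))"
      unfolding z_def power_int_power' by (simp add: mult.commute)
    also have "\<dots> = 1" by (simp add: power_int_mult oa1)
    finally show ?thesis .
  qed
  have zb: "z ^ nb = 1"
  proof -
    have "z ^ nb = \<beta> powi (int nb * ((int w' - int w) * m2))"
      unfolding z2 power_int_power' by (simp add: mult.commute)
    also have "\<dots> = 1" by (simp add: power_int_mult ob1)
    finally show ?thesis .
  qed
  have z: "z = 1" using coprime_orders_one[OF za zb g] .
  have "int na dvd (int u - int u') * m1" using z elem_order_powi[OF oa] unfolding z_def by blast
  hence "int na dvd (int u - int u')" using g1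
    by (metis coprime_dvd_mult_left_iff coprime_iff_gcd_eq_1)
  hence uu: "u = u'"
  proof -
    assume d: "int na dvd (int u - int u')"
    show "u = u'"
    proof (rule ccontr)
      assume "u \<noteq> u'"
      hence "int u - int u' \<noteq> 0" by simp
      hence "\<bar>int na\<bar> \<le> \<bar>int u - int u'\<bar>" using dvd_imp_le_int d by blast
      thus False using u by linarith
    qed
  qed
  have "int nb dvd (int w' - int w) * m2" using z z2 elem_order_powi[OF ob] by metis
  hence "int nb dvd (int w' - int w)" using g2
    by (metis coprime_dvd_mult_left_iff coprime_iff_gcd_eq_1)
  hence "w = w'"
  proof -
    assume d: "int nb dvd (int w' - int w)"
    show "w = w'"
    proof (rule ccontr)
      assume "w \<noteq> w'"
      hence "int w' - int w \<noteq> 0" by simp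
      hence "\<bar>int nb\<bar> \<le> \<bar>int w' - int w\<bar>" using dvd_imp_le_int d by blast
      thus False using w by linarith
    qed
  qed
  thus ?thesis using uu by simp
qed


lemma poly_supp:
  fixes a :: "'a::comm_ring_1 poly"
  shows "poly a z = (\<Sum>u\<in>{u. coeff a u \<noteq> 0}. coeff a u * z ^ u)"
proof -
  have "poly a z = (\<Sum>u\<le>degree a. coeff a u * z ^ u)" by (rule poly_altdef)
  also have "\<dots> = (\<Sum>u\<in>{u. coeff a u \<noteq> 0}. coeff a u * z ^ u)"
    by (rule sum.mono_neutral_right) (auto intro: le_degree)
  finally show ?thesis .
qed

lemma supp_finite: "finite {u. coeff (a::'a::zero poly) u \<noteq> 0}"
  by (rule finite_subset[of _ "{..degree a}"]) (auto intro: le_degree)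

lemma powi_expand:
  fixes x :: "'f::field"
  assumes "x \<noteq> 0"
  shows "(x powi (f + int i * m + int j)) ^ u = (x^u) powi f * ((x^u) powi m) ^ i * (x^u) ^ j"
proof -
  define y where "y = x ^ u"
  have y: "y \<noteq> 0" using assms by (simp add: y_def)
  have "(x powi (f + int i * m + int j)) ^ u = y powi (f + int i * m + int j)"
    unfolding y_def power_int_power' power_int_power by (simp add: mult.commute)
  also have "\<dots> = y powi f * y powi (m * int i) * y powi (int j)"
    using y by (simp add: power_int_add mult.commute)
  also have "\<dots> = y powi f * (y powi m) ^ i * y ^ j"
    by (simp add: power_int_mult)
  finally show ?thesis unfolding y_def .
qed

lemma sum_prod_cart:
  "finite S \<Longrightarrow> finite T \<Longrightarrow> (\<Sum>u\<in>S. f u) * (\<Sum>w\<in>T. g w) = (\<Sum>(u,w)\<in>S \<times> T. f u * g w)"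
  for f g :: "_ \<Rightarrow> 'a::comm_semiring_1"
  by (simp add: sum_product sum.cartesian_product)


theorem theorem5:
  fixes K Fa Fb :: "'f::{finite,field} set"
    and q na nb sa sb da db :: nat
    and A B :: "'f poly set"
    and \<alpha> \<beta> :: 'f
    and f1 f2 m1 m2 \<delta> \<nu> :: int
  assumes K: "is_subfield K" "card K = q"
    and Fa: "is_subfield Fa" "card Fa = q ^ sa"
    and Fb: "is_subfield Fb" "card Fb = q ^ sb"
    and Fs: "card (UNIV :: 'f set) = q ^ lcm sa sb"
    and A: "cyclic_code K na A" "min_distance A da"
    and B: "cyclic_code K nb B" "min_distance B db"
    and coprime_n: "gcd na nb = 1"
    and alpha: "\<alpha> \<in> Fa" "elem_order \<alpha> na"
    and beta: "\<beta> \<in> Fb" "elem_order \<beta> nb"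
    and m: "m1 \<noteq> 0" "m2 \<noteq> 0" "gcd (int na) m1 = 1" "gcd (int nb) m2 = 1"
    and \<delta>: "\<delta> \<ge> 2" and \<nu>: "\<nu> > 0"
    and hyp: "\<And>a b j i. a \<in> A \<Longrightarrow> b \<in> B \<Longrightarrow> 0 \<le> j \<Longrightarrow> j \<le> \<nu> \<Longrightarrow>
                 i < nat (\<delta> - 1) \<Longrightarrow>
                 poly a (\<alpha> powi (f1 + int i * m1 + j)) * poly b (\<beta> powi (f2 + int i * m2 + j)) = 0"
  shows "real da \<ge> of_int \<lceil>real_of_int (\<delta> + \<nu>) / real db\<rceil>"
proof -
  obtain a where a: "a \<in> A" "a \<noteq> 0" "hweight a = da" using A(2) unfolding min_distance_def by blast
  obtain b where b: "b \<in> B" "b \<noteq> 0" "hweight b = db" using B(2) unfolding min_distance_def by blast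
  have dega: "degree a < na" using A(1) a(1) unfolding cyclic_code_def by blast
  have degb: "degree b < nb" using B(1) b(1) unfolding cyclic_code_def by blast
  define Sa where "Sa = {u. coeff a u \<noteq> 0}"
  define Sb where "Sb = {w. coeff b w \<noteq> 0}"
  have finSa: "finite Sa" and finSb: "finite Sb" unfolding Sa_def Sb_def by (rule supp_finite)+
  have cSa: "card Sa = da" using a(3) unfolding hweight_def Sa_def by simp
  have cSb: "card Sb = db" using b(3) unfolding hweight_def Sb_def by simp
  have Sa_lt: "u < na" if "u \<in> Sa" for u using that dega le_degree unfolding Sa_def by fastforce
  have Sb_lt: "w < nb" if "w \<in> Sb" for w using that degb le_degree unfolding Sb_def by fastforce
  have neSa: "Sa \<noteq> {}"
  proof
    assume "Sa = {}"
    hence "\<And>u. coeff a u = coeff 0 u" unfolding Sa_def by auto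
    hence "a = 0" by (rule poly_eqI)
    thus False using a(2) by simp
  qed
  have neSb: "Sb \<noteq> {}"
  proof
    assume "Sb = {}"
    hence "\<And>u. coeff b u = coeff 0 u" unfolding Sb_def by auto
    hence "b = 0" by (rule poly_eqI)
    thus False using b(2) by simp
  qed
  have an: "\<alpha> \<noteq> 0" using elem_order_nz[OF alpha(2)] .
  have bn: "\<beta> \<noteq> 0" using elem_order_nz[OF beta(2)] .
  define T where "T = Sa \<times> Sb"
  define c where "c = (\<lambda>(u::nat,w::nat). coeff a u * coeff b w * (\<alpha>^u) powi f1 * (\<beta>^w) powi f2)"
  define X where "X = (\<lambda>(u::nat,w::nat). (\<alpha>^u) powi m1 * (\<beta>^w) powi m2)"
  define Y where "Y = (\<lambda>(u::nat,w::nat). (\<alpha>^u) powi 1 * (\<beta>^w) powi 1)"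
  define D where "D = nat (\<delta> - 1)"
  define V where "V = nat \<nu>"
  have finT: "finite T" unfolding T_def using finSa finSb by simp
  have neT: "T \<noteq> {}" unfolding T_def using neSa neSb by simp
  have cnz: "c t \<noteq> 0" if "t \<in> T" for t
    using that an bn unfolding T_def c_def Sa_def Sb_def by auto
  have injX: "inj_on X T"
  proof (rule inj_onI)
    fix s t assume s: "s \<in> T" and t: "t \<in> T" and e: "X s = X t"
    obtain u w where s': "s = (u,w)" by (cases s)
    obtain u' w' where t': "t = (u',w')" by (cases t)
    show "s = t" using inj_lemma[OF alpha(2) beta(2) coprime_n m(3) m(4), of u u' w w']
      using s t e Sa_lt Sb_lt unfolding s' t' T_def X_def by auto
  qed
  have injY: "inj_on Y T"
  proof (rule inj_onI)
    fix s t assume s: "s \<in> T" and t: "t \<in> T" and e: "Y s = Y t"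
    obtain u w where s': "s = (u,w)" by (cases s)
    obtain u' w' where t': "t = (u',w')" by (cases t)
    show "s = t" using inj_lemma[OF alpha(2) beta(2) coprime_n _ _, of 1 1 u u' w w']
      using s t e Sa_lt Sb_lt unfolding s' t' T_def Y_def by auto
  qed
  have D1: "D \<ge> 1" using \<delta> unfolding D_def by simp
  have z: "(\<Sum>t\<in>T. c t * X t ^ i * Y t ^ j) = 0" if i: "i < D" and j: "j \<le> V" for i j
  proof -
    have "poly a (\<alpha> powi (f1 + int i * m1 + int j)) * poly b (\<beta> powi (f2 + int i * m2 + int j)) = 0"
    proof -
      have jj: "int j \<le> \<nu>" using j \<nu> unfolding V_def by linarith
      have ii: "i < nat (\<delta> - 1)" using i unfolding D_def .
      show ?thesis using hyp[OF a(1) b(1) _ jj ii] by simp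
    qed
    moreover have "poly a (\<alpha> powi (f1 + int i * m1 + int j)) * poly b (\<beta> powi (f2 + int i * m2 + int j))
       = (\<Sum>t\<in>T. c t * X t ^ i * Y t ^ j)"
    proof -
      have "poly a (\<alpha> powi (f1 + int i * m1 + int j)) * poly b (\<beta> powi (f2 + int i * m2 + int j))
         = (\<Sum>u\<in>Sa. coeff a u * (\<alpha> powi (f1 + int i * m1 + int j)) ^ u) *
           (\<Sum>w\<in>Sb. coeff b w * (\<beta> powi (f2 + int i * m2 + int j)) ^ w)"
        unfolding Sa_def Sb_def by (simp only: poly_supp)
      also have "\<dots> = (\<Sum>(u,w)\<in>T. coeff a u * (\<alpha> powi (f1 + int i * m1 + int j)) ^ u *
           (coeff b w * (\<beta> powi (f2 + int i * m2 + int j)) ^ w))"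
        unfolding T_def by (rule sum_prod_cart[OF finSa finSb])
      also have "\<dots> = (\<Sum>t\<in>T. c t * X t ^ i * Y t ^ j)"
      proof (rule sum.cong[OF refl])
        fix t assume "t \<in> T"
        obtain u w where t: "t = (u,w)" by (cases t)
        show "(case t of (u,w) \<Rightarrow> coeff a u * (\<alpha> powi (f1 + int i * m1 + int j)) ^ u *
           (coeff b w * (\<beta> powi (f2 + int i * m2 + int j)) ^ w)) = c t * X t ^ i * Y t ^ j"
          unfolding t c_def X_def Y_def using powi_expand[OF an, of f1 i m1 j u] powi_expand[OF bn, of f2 i m2 j w]
          by (simp add: power_mult_distrib mult_ac)
      qed
      finally show ?thesis .
    qed
    ultimately show ?thesis by simp
  qed
  have "D + V + 1 \<le> card T" by (rule abstract_bound[OF finT neT cnz injX injY D1 z])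
  hence key: "\<delta> + \<nu> \<le> int da * int db"
  proof -
    have h: "Suc (nat (\<delta> - 1) + nat \<nu>) \<le> da * db"
      using \<open>D + V + 1 \<le> card T\<close> unfolding T_def D_def V_def using cSa cSb by (simp add: card_cartesian_product)
    hence "int (Suc (nat (\<delta> - 1) + nat \<nu>)) \<le> int (da * db)" by (simp only: of_nat_le_iff)
    thus ?thesis using \<delta> \<nu> by simp
  qed
  have "card Sb > 0" using finSb neSb card_gt_0_iff by blast
  hence db1: "db \<ge> 1" using cSb by simp
  have "real_of_int (\<delta> + \<nu>) / real db \<le> real da"
  proof -
    have "real_of_int (\<delta> + \<nu>) \<le> real_of_int (int da * int db)" using key
      by (simp only: of_int_le_iff)
    hence "real_of_int (\<delta> + \<nu>) \<le> real da * real db" by simp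
    thus ?thesis using db1 by (simp add: divide_le_eq)
  qed
  hence "\<lceil>real_of_int (\<delta> + \<nu>) / real db\<rceil> \<le> int da" by (simp add: ceiling_le_iff)
  thus ?thesis by linarith
qed

end
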